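(* Let $\mathcal{N}$ be a fully-connected feed-forward network with layer widths $n_0=d,n_1,\dots,n_H=1$, mass $\Psi=\prod_{i=0}^H n_i$ and with weight set $\mathcal{W}=\{w_1,\dots,w_N\}$ of real numbers, whose expected output is \[ Y_N = q\sum_{i_1,\dots,i_H=1}^{N}\ \sum_{j=1}^{r_{i_1,\dots,i_H}} X^{(j)}_{i_1,\dots,i_H}\,\rho\prod_{k=1}^H w_{i_k}, \] where $q=\Psi^{-(H-1)/(2H)}$, $\rho\in(0,1]$, $r_{i_1,\dots,i_H}\in\{0,1\}$ indicates whether the ordered weight configuration $(w_{i_1},\dots,w_{i_H})$ is the sequence of weights along some input-to-output path (so $\sum r_{i_1,\dots,i_H}=\Psi$), and the $X^{(j)}_{i_1,\dots,i_H}$ are independent $N(0,1)$ random variables. Let $\mathcal{M}$ be an $(s,\epsilon)$-reduction image of $\mathcal{N}$ for some $s\le N$ and $\epsilon\in[0,0.5]$, and let $Y_s$ be the expected output of $\mathcal{M}$ (defined by the same formula with $\mathcal{M}$'s edge weights). Then \[ \mathrm{corr}(\mathrm{sign}(Y_s),\mathrm{sign}(Y_N))\ \ge\ \frac{1-2\epsilon}{1+2\epsilon}, \] where $\mathrm{corr}(A,B)=\frac{\mathbb{E}[(A-\mathbb{E}A)(B-\mathbb{E}B)]}{\mathrm{std}(A)\,\mathrm{std}(B)}$.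
   Context: A network $\mathcal{M}$ is an $(s,\epsilon)$-reduction image of $\mathcal{N}$ (for $\epsilon\in[0,1]$) if it has the same graph of connections as $\mathcal{N}$ but its edge weights take only $s\le N$ distinct values, and the prediction accuracies of $\mathcal{N}$ and $\mathcal{M}$ differ by no more than $\epsilon$, i.e. they classify at most an $\epsilon$ fraction of data points differently (the prediction being the sign of the output; $\mathrm{sign}(Y_s)$ and $\mathrm{sign}(Y_N)$ are random, with randomness coming from the inputs $X$). *)

theory Defs
  imports "HOL-Probability.Probability"
begin

text \<open>A fully-connected feed-forward network with H layers of edges and layer widths
  n 0 = d, n 1, ..., n H = 1.  Nodes of layer k are 0 ..< n k.  An edge weight assignment
  w k a b is the weight of the edge from node a of layer k-1 to node b of layer k
  (for 1 <= k <= H).  An input-to-output path picks one node p k in every layer k <= H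
  (normalised by p k = 0 for k > H).\<close>

definition paths :: "(nat \<Rightarrow> nat) \<Rightarrow> nat \<Rightarrow> (nat \<Rightarrow> nat) set" where
  "paths n H = {p. (\<forall>k\<le>H. p k < n k) \<and> (\<forall>k>H. p k = 0)}"

definition edges :: "(nat \<Rightarrow> nat) \<Rightarrow> nat \<Rightarrow> (nat \<times> nat \<times> nat) set" where
  "edges n H = {(k, a, b). 1 \<le> k \<and> k \<le> H \<and> a < n (k - 1) \<and> b < n k}"

definition weight_values :: "(nat \<Rightarrow> nat) \<Rightarrow> nat \<Rightarrow> (nat \<Rightarrow> nat \<Rightarrow> nat \<Rightarrow> real) \<Rightarrow> real set" where
  "weight_values n H w = (\<lambda>(k, a, b). w k a b) ` edges n H"

definition path_weight :: "nat \<Rightarrow> (nat \<Rightarrow> nat \<Rightarrow> nat \<Rightarrow> real) \<Rightarrow> (nat \<Rightarrow> nat) \<Rightarrow> real" where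
  "path_weight H w p = (\<Prod>k\<in>{1..H}. w k (p (k - 1)) (p k))"

definition mass :: "(nat \<Rightarrow> nat) \<Rightarrow> nat \<Rightarrow> nat" where
  "mass n H = (\<Prod>i\<in>{0..H}. n i)"

definition qconst :: "(nat \<Rightarrow> nat) \<Rightarrow> nat \<Rightarrow> real" where
  "qconst n H = real (mass n H) powr (- (real H - 1) / (2 * real H))"

text \<open>Since every path is determined by its sequence of edges (each edge carries its own weight
  index), each ordered weight configuration occurs on at most one path (r in {0,1}), so the
  sum over configurations with multiplicities r is the sum over paths.\<close>
definition net_output :: "(nat \<Rightarrow> nat) \<Rightarrow> nat \<Rightarrow> real \<Rightarrow> (nat \<Rightarrow> nat \<Rightarrow> nat \<Rightarrow> real)
    \<Rightarrow> ((nat \<Rightarrow> nat) \<Rightarrow> 'a \<Rightarrow> real) \<Rightarrow> 'a \<Rightarrow> real" where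
  "net_output n H \<rho> w X \<omega> = qconst n H * (\<Sum>p\<in>paths n H. X p \<omega> * \<rho> * path_weight H w p)"

text \<open>(s, eps)-reduction image: same graph (same widths), edge weights w' taking exactly s
  distinct values with s <= N (N = number of weights/edges), and the predictions (signs)
  differ on at most an eps fraction (probability) of inputs.\<close>
definition reduction_image :: "'a measure \<Rightarrow> (nat \<Rightarrow> nat) \<Rightarrow> nat \<Rightarrow> real
    \<Rightarrow> ((nat \<Rightarrow> nat) \<Rightarrow> 'a \<Rightarrow> real) \<Rightarrow> (nat \<Rightarrow> nat \<Rightarrow> nat \<Rightarrow> real) \<Rightarrow> (nat \<Rightarrow> nat \<Rightarrow> nat \<Rightarrow> real)
    \<Rightarrow> nat \<Rightarrow> real \<Rightarrow> bool" where
  "reduction_image M n H \<rho> X w w' s \<epsilon> \<longleftrightarrow>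
     s \<le> card (edges n H) \<and> card (weight_values n H w') = s \<and> 0 \<le> \<epsilon> \<and> \<epsilon> \<le> 1 \<and>
     measure M {\<omega> \<in> space M. sgn (net_output n H \<rho> w' X \<omega>) \<noteq> sgn (net_output n H \<rho> w X \<omega>)}
       \<le> \<epsilon>"

definition variance_of :: "'a measure \<Rightarrow> ('a \<Rightarrow> real) \<Rightarrow> real" where
  "variance_of M A = (\<integral>\<omega>. (A \<omega> - (\<integral>x. A x \<partial>M))\<^sup>2 \<partial>M)"

definition corr :: "'a measure \<Rightarrow> ('a \<Rightarrow> real) \<Rightarrow> ('a \<Rightarrow> real) \<Rightarrow> real" where
  "corr M A B =
     (\<integral>\<omega>. (A \<omega> - (\<integral>x. A x \<partial>M)) * (B \<omega> - (\<integral>x. B x \<partial>M)) \<partial>M)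
       / (sqrt (variance_of M A) * sqrt (variance_of M B))"

end

theory Submission
  imports Defs
begin

lemma (in prob_space) key_gauss:
  fixes X :: "'i \<Rightarrow> 'a \<Rightarrow> real" and c :: "'i \<Rightarrow> real"
  assumes ind: "indep_vars (\<lambda>_. borel) X P"
    and dist: "\<forall>p\<in>P. distributed M lborel (X p) std_normal_density"
    and Y: "Y = (\<lambda>\<omega>. \<Sum>p\<in>P. c p * X p \<omega>)"
    and v: "variance_of M (\<lambda>\<omega>. sgn (Y \<omega>)) \<noteq> 0"
  shows "(AE \<omega> in M. Y \<omega> \<noteq> 0) \<and> (\<integral>\<omega>. sgn (Y \<omega>) \<partial>M) = 0"
proof -
  have fin: "finite P"
  proof (rule ccontr)
    assume "infinite P"
    then have "Y = (\<lambda>_. 0)" using Y by auto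
    then show False using v by (simp add: variance_of_def)
  qed
  define P' where "P' = {p\<in>P. c p \<noteq> 0}"
  have fin': "finite P'" using fin by (simp add: P'_def)
  have Y': "Y = (\<lambda>\<omega>. \<Sum>p\<in>P'. c p * X p \<omega>)"
    unfolding Y by (intro ext sum.mono_neutral_right) (use fin in \<open>auto simp: P'_def\<close>)
  have ne: "P' \<noteq> {}"
  proof
    assume "P' = {}"
    then have "Y = (\<lambda>_. 0)" using Y' by auto
    then show False using v by (simp add: variance_of_def)
  qed
  have ind': "indep_vars (\<lambda>_. borel) (\<lambda>p \<omega>. c p * X p \<omega>) P'"
    by (rule indep_vars_compose2[where Y="\<lambda>p x. c p * x" and M'="\<lambda>_. borel"])
       (auto intro: indep_vars_subset[OF ind] simp: P'_def)
  have dist': "distributed M lborel (\<lambda>\<omega>. c p * X p \<omega>) (normal_density 0 \<bar>c p\<bar>)" if "p \<in> P'" for p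
  proof -
    have "distributed M lborel (\<lambda>x. 0 + c p * X p x) (normal_density (0 + c p * 0) (\<bar>c p\<bar> * 1))"
      by (rule normal_density_affine) (use that dist in \<open>auto simp: P'_def\<close>)
    then show ?thesis by (simp add: prob_space)
  qed
  define \<sigma> where "\<sigma> = sqrt (\<Sum>p\<in>P'. \<bar>c p\<bar>\<^sup>2)"
  have dY: "distributed M lborel Y (normal_density 0 \<sigma>)"
    using sum_indep_normal[OF fin' ne ind', of "\<lambda>p. \<bar>c p\<bar>" "\<lambda>_. 0"] dist'
    unfolding Y' \<sigma>_def by (auto simp: P'_def)
  have \<sigma>pos: "0 < \<sigma>"
  proof -
    obtain p where "p \<in> P'" using ne by auto
    then have "0 < (\<Sum>p\<in>P'. \<bar>c p\<bar>\<^sup>2)"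
      using fin' by (intro sum_pos2[of _ p]) (auto simp: P'_def)
    then show ?thesis by (simp add: \<sigma>_def)
  qed
  have dY2: "distributed M lborel (\<lambda>x. 0 + (-1) * Y x) (normal_density (0 + (-1) * 0) (\<bar>-1\<bar> * \<sigma>))"
    by (rule normal_density_affine[OF dY \<sigma>pos]) simp
  have mY: "Y \<in> borel_measurable M" using dY by (auto dest: distributed_measurable)
  have eqd: "distr M lborel Y = distr M lborel (\<lambda>x. - Y x)"
    using dY dY2 by (simp add: distributed_distr_eq_density)
  have "(\<integral>\<omega>. sgn (Y \<omega>) \<partial>M) = (\<integral>y. sgn y \<partial>distr M lborel Y)"
    using mY by (subst integral_distr) auto
  also have "\<dots> = (\<integral>y. sgn y \<partial>distr M lborel (\<lambda>x. - Y x))" by (simp add: eqd)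
  also have "\<dots> = (\<integral>\<omega>. sgn (- Y \<omega>) \<partial>M)"
    using mY by (subst integral_distr) auto
  also have "\<dots> = - (\<integral>\<omega>. sgn (Y \<omega>) \<partial>M)" by (simp add: sgn_minus)
  finally have E0: "(\<integral>\<omega>. sgn (Y \<omega>) \<partial>M) = 0" by simp
  have "AE y in density lborel (normal_density 0 \<sigma>). y \<noteq> 0"
    by (subst AE_density) (auto intro: AE_mp[OF AE_lborel_singleton])
  moreover have "distr M lborel Y = density lborel (normal_density 0 \<sigma>)"
    using dY by (rule distributed_distr_eq_density)
  ultimately have "AE y in distr M lborel Y. y \<noteq> 0"
    by metis
  then have "AE \<omega> in M. Y \<omega> \<noteq> 0"
    by (rule AE_distrD[rotated]) (use mY in simp)
  with E0 show ?thesis by simp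
qed

theorem theorem3p2:
  fixes M :: "'a measure" and n :: "nat \<Rightarrow> nat" and H d s :: nat and \<rho> \<epsilon> :: real
    and w w' :: "nat \<Rightarrow> nat \<Rightarrow> nat \<Rightarrow> real" and X :: "(nat \<Rightarrow> nat) \<Rightarrow> 'a \<Rightarrow> real"
  assumes "prob_space M"
    and "1 \<le> H" and "n 0 = d" and "n H = 1" and "\<forall>i\<le>H. 1 \<le> n i"
    and "0 < \<rho>" and "\<rho> \<le> 1"
    and "prob_space.indep_vars M (\<lambda>_. borel) X (paths n H)"
    and "\<forall>p\<in>paths n H. distributed M lborel (X p) std_normal_density"
    and "reduction_image M n H \<rho> X w w' s \<epsilon>"
    and "0 \<le> \<epsilon>" and "\<epsilon> \<le> 1/2"
    and "variance_of M (\<lambda>\<omega>. sgn (net_output n H \<rho> w X \<omega>)) \<noteq> 0"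
    and "variance_of M (\<lambda>\<omega>. sgn (net_output n H \<rho> w' X \<omega>)) \<noteq> 0"
  shows "corr M (\<lambda>\<omega>. sgn (net_output n H \<rho> w' X \<omega>)) (\<lambda>\<omega>. sgn (net_output n H \<rho> w X \<omega>))
           \<ge> (1 - 2 * \<epsilon>) / (1 + 2 * \<epsilon>)"
proof -
  interpret prob_space M by (rule assms(1))
  have nY: "net_output n H \<rho> v X = (\<lambda>\<omega>. \<Sum>p\<in>paths n H. (qconst n H * \<rho> * path_weight H v p) * X p \<omega>)" for v
    unfolding net_output_def by (intro ext) (simp add: sum_distrib_left mult_ac)
  have mX: "\<forall>p\<in>paths n H. X p \<in> borel_measurable M"
  proof
    fix p assume "p \<in> paths n H"
    then have "X p \<in> measurable M lborel"
      using assms(9) by (blast intro: distributed_measurable)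
    then show "X p \<in> borel_measurable M" by simp
  qed
  have mY: "net_output n H \<rho> v X \<in> borel_measurable M" for v
    unfolding nY using mX by (auto intro!: borel_measurable_sum borel_measurable_times)
  note k1 = key_gauss[OF assms(8) assms(9) nY[of w] assms(13)]
  note k2 = key_gauss[OF assms(8) assms(9) nY[of w'] assms(14)]
  define A where "A = (\<lambda>\<omega>. sgn (net_output n H \<rho> w' X \<omega>))"
  define B where "B = (\<lambda>\<omega>. sgn (net_output n H \<rho> w X \<omega>))"
  have mA: "A \<in> borel_measurable M" unfolding A_def using mY by measurable
  have mB: "B \<in> borel_measurable M" unfolding B_def using mY by measurable
  have EA: "(\<integral>x. A x \<partial>M) = 0" using k2 by (simp add: A_def)
  have EB: "(\<integral>x. B x \<partial>M) = 0" using k1 by (simp add: B_def)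
  have vA: "variance_of M A = 1"
  proof -
    have "variance_of M A = (\<integral>\<omega>. 1 \<partial>M)"
      unfolding variance_of_def EA
      by (rule integral_cong_AE) (use mA k2 in \<open>auto simp: A_def sgn_if elim: AE_mp\<close>)
    then show ?thesis by (simp add: prob_space)
  qed
  have vB: "variance_of M B = 1"
  proof -
    have "variance_of M B = (\<integral>\<omega>. 1 \<partial>M)"
      unfolding variance_of_def EB
      by (rule integral_cong_AE) (use mB k1 in \<open>auto simp: B_def sgn_if elim: AE_mp\<close>)
    then show ?thesis by (simp add: prob_space)
  qed
  define S where "S = {\<omega> \<in> space M. A \<omega> \<noteq> B \<omega>}"
  have PS: "measure M S \<le> \<epsilon>" using assms(10) unfolding reduction_image_def S_def A_def B_def by auto
  have Ssets: "S \<in> sets M" unfolding S_def using mA mB by measurable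
  have "(\<integral>\<omega>. A \<omega> * B \<omega> \<partial>M) = (\<integral>\<omega>. 1 - 2 * indicator S \<omega> \<partial>M)"
    by (rule integral_cong_AE)
       (use mA mB Ssets k1 k2 in \<open>auto simp: A_def B_def S_def sgn_if indicator_def elim: AE_mp\<close>)
  also have "\<dots> = 1 - 2 * measure M S"
  proof -
    have i: "integrable M (\<lambda>\<omega>. 2 * indicator S \<omega> :: real)"
      using Ssets by (intro integrable_mult_right integrable_real_indicator) (auto simp: less_top[symmetric])
    have "(\<integral>\<omega>. 1 - 2 * indicator S \<omega> \<partial>M) = (\<integral>\<omega>. 1 \<partial>M) - (\<integral>\<omega>. 2 * indicator S \<omega> \<partial>M :: real)"
      using Bochner_Integration.integral_diff[OF _ i, of "\<lambda>_. 1"] by simp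
    then show ?thesis using Ssets by (simp add: prob_space)
  qed
  finally have AB: "(\<integral>\<omega>. A \<omega> * B \<omega> \<partial>M) = 1 - 2 * measure M S" .
  have "corr M A B = 1 - 2 * measure M S"
    unfolding corr_def vA vB EA EB using AB by simp
  moreover have "(1 - 2 * \<epsilon>) / (1 + 2 * \<epsilon>) \<le> 1 - 2 * \<epsilon>"
    using assms(11,12) divide_left_mono[of 1 "1 + 2 * \<epsilon>" "1 - 2 * \<epsilon>"] by simp
  ultimately show ?thesis using PS unfolding A_def B_def by linarith
qed

end
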